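(* Let $X$ be a compact Hausdorff space, $(H,e)$ a unital Hilbert space, and $T:C(X)\to H$ a unital positive linear map with associated probability measure $\mu$ (so $(Tv,e)=\int v\,d\mu$). Then $T$ is a nuclear morphism if and only if $T+e\odot q$ is separable for some $q\in I_\mu(X)$; in this case $q$ can be chosen positive.
   Context: A Hilbert $*$-space is a complex Hilbert space (inner product linear in the first variable) with a conjugate-linear $\zeta\mapsto\zeta^*$, $\zeta^{**}=\zeta$, $(\zeta^*,\eta^* )=\overline{(\zeta,\eta)}$. A unital Hilbert space $(H,e)$ has a fixed hermitian unit vector $e$ and unital cone $\mathfrak c_e=\{\zeta\in H_h:\|\zeta\|\le\sqrt2(\zeta,e)\}$. A linear map $T:C(X)\to H$ is unital positive if $T(1)=e$ and $T(C(X)_+)\subseteq\mathfrak c_e$; for such $T$, $v\mapsto(Tv,e)$ is given by a unique probability Radon measure $\mu$. Radon measures are identified with functionals on $C(X)$, $\langle v,q\rangle=\int v\,dq$, with total-variation norm $\|q\|$. $I_\mu(X)$ denotes the set of real (signed) Radon measures absolutely continuous with respect to $\mu$ (i.e. $h\mu$ with $h\in L^1(X,\mu)$ real). For $\gamma\in H$ and a measure $q$, $\gamma\odot q$ is the map $v\mapsto\langle v,q\rangle\gamma$. A linear map $\phi:C(X)\to H$ is separable if there are positive Radon measures $q_l$ and vectors $p_l\in\mathfrak c_e$ ($l=1,2,\dots$) with $\phi(v)=\lim_k\sum_{l=1}^k\langle v,q_l\rangle p_l$ in $H$ for every $v$. $T$ is a nuclear morphism if $T=\sum_l\gamma_l\odot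 q_l$ with $\gamma_l\in H_h$, $\|\gamma_l\|\le1$, $q_l\in I_\mu(X)$ and $\sum_l\|q_l\|<\infty$. *)

theory Defs
  imports "HOL-Probability.Probability"
begin

text \<open>The carrier is a real Banach space type 'h;
  complex scalar multiplication cmul extends the real one, ip is a complex inner
  product (linear in the first variable) inducing the norm, and star is the involution.\<close>

definition hilbert_star_space ::
  "(complex \<Rightarrow> 'h::banach \<Rightarrow> 'h) \<Rightarrow> ('h \<Rightarrow> 'h \<Rightarrow> complex) \<Rightarrow> ('h \<Rightarrow> 'h) \<Rightarrow> bool" where
  "hilbert_star_space cmul ip star \<longleftrightarrow>
     (\<forall>r x. cmul (complex_of_real r) x = scaleR r x) \<and>
     (\<forall>a b x. cmul (a + b) x = cmul a x + cmul b x) \<and>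
     (\<forall>a x y. cmul a (x + y) = cmul a x + cmul a y) \<and>
     (\<forall>a b x. cmul (a * b) x = cmul a (cmul b x)) \<and>
     (\<forall>x y z. ip (x + y) z = ip x z + ip y z) \<and>
     (\<forall>a x y. ip (cmul a x) y = a * ip x y) \<and>
     (\<forall>x y. ip y x = cnj (ip x y)) \<and>
     (\<forall>x. norm x = sqrt (Re (ip x x))) \<and>
     (\<forall>x y. star (x + y) = star x + star y) \<and>
     (\<forall>a x. star (cmul a x) = cmul (cnj a) (star x)) \<and>
     (\<forall>x. star (star x) = x) \<and>
     (\<forall>x y. ip (star x) (star y) = cnj (ip x y))"

definition hermitian :: "('h \<Rightarrow> 'h) \<Rightarrow> 'h set" where
  "hermitian star = {z. star z = z}"

definition unital_cone ::
  "('h::real_normed_vector \<Rightarrow> 'h \<Rightarrow> complex) \<Rightarrow> ('h \<Rightarrow> 'h) \<Rightarrow> 'h \<Rightarrow> 'h set" where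
  "unital_cone ip star e = {z \<in> hermitian star. norm z \<le> sqrt 2 * Re (ip z e)}"

text \<open>C(X): continuous complex-valued functions on X (X compact, so UNIV of the type).\<close>
definition CX :: "('x::topological_space \<Rightarrow> complex) set" where
  "CX = {v. continuous_on UNIV v}"

definition CX_pos :: "('x::topological_space \<Rightarrow> complex) set" where
  "CX_pos = {v \<in> CX. \<forall>x. Im (v x) = 0 \<and> Re (v x) \<ge> 0}"

text \<open>Linear maps C(X) \<rightarrow> H (only the values on C(X) matter).\<close>
definition lin_map :: "(complex \<Rightarrow> 'h::real_vector \<Rightarrow> 'h) \<Rightarrow> (('x::topological_space \<Rightarrow> complex) \<Rightarrow> 'h) \<Rightarrow> bool" where
  "lin_map cmul T \<longleftrightarrow>
     (\<forall>v\<in>CX. \<forall>w\<in>CX. T (\<lambda>x. v x + w x) = T v + T w) \<and>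
     (\<forall>c. \<forall>v\<in>CX. T (\<lambda>x. c * v x) = cmul c (T v))"

definition unital_positive ::
  "(complex \<Rightarrow> 'h::real_normed_vector \<Rightarrow> 'h) \<Rightarrow> ('h \<Rightarrow> 'h \<Rightarrow> complex) \<Rightarrow> ('h \<Rightarrow> 'h) \<Rightarrow> 'h
   \<Rightarrow> (('x::topological_space \<Rightarrow> complex) \<Rightarrow> 'h) \<Rightarrow> bool" where
  "unital_positive cmul ip star e T \<longleftrightarrow>
     lin_map cmul T \<and> T (\<lambda>x. 1) = e \<and> (\<forall>v\<in>CX_pos. T v \<in> unital_cone ip star e)"

definition radon_measure :: "'x::topological_space measure \<Rightarrow> bool" where
  "radon_measure M \<longleftrightarrow> sets M = sets borel \<and> finite_measure M \<and>
     (\<forall>A\<in>sets M. emeasure M A = (SUP K\<in>{K. compact K \<and> K \<subseteq> A}. emeasure M K))"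

definition pair_meas :: "('x::topological_space \<Rightarrow> complex) \<Rightarrow> 'x measure \<Rightarrow> complex" where
  "pair_meas v q = integral\<^sup>L q v"

text \<open>Elements of I_mu(X) are represented by their (real, mu-integrable) density h,
  i.e. q = h mu.  Pairing and total variation norm:\<close>
definition in_I :: "'x::topological_space measure \<Rightarrow> ('x \<Rightarrow> real) \<Rightarrow> bool" where
  "in_I \<mu> h \<longleftrightarrow> h \<in> borel_measurable \<mu> \<and> integrable \<mu> h"

definition pair_dens :: "'x::topological_space measure \<Rightarrow> ('x \<Rightarrow> complex) \<Rightarrow> ('x \<Rightarrow> real) \<Rightarrow> complex" where
  "pair_dens \<mu> v h = (\<integral>x. v x * complex_of_real (h x) \<partial>\<mu>)"

definition tv_norm_dens :: "'x::topological_space measure \<Rightarrow> ('x \<Rightarrow> real) \<Rightarrow> real" where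
  "tv_norm_dens \<mu> h = (\<integral>x. \<bar>h x\<bar> \<partial>\<mu>)"

definition separable_map ::
  "(complex \<Rightarrow> 'h::real_normed_vector \<Rightarrow> 'h) \<Rightarrow> ('h \<Rightarrow> 'h \<Rightarrow> complex) \<Rightarrow> ('h \<Rightarrow> 'h) \<Rightarrow> 'h
   \<Rightarrow> (('x::topological_space \<Rightarrow> complex) \<Rightarrow> 'h) \<Rightarrow> bool" where
  "separable_map cmul ip star e \<phi> \<longleftrightarrow>
     lin_map cmul \<phi> \<and>
     (\<exists>(q::nat \<Rightarrow> 'x measure) (p::nat \<Rightarrow> 'h).
        (\<forall>l. radon_measure (q l)) \<and> (\<forall>l. p l \<in> unital_cone ip star e) \<and>
        (\<forall>v\<in>CX. (\<lambda>k. \<Sum>l<k. cmul (pair_meas v (q l)) (p l)) \<longlonglongrightarrow> \<phi> v))"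

definition nuclear_morphism ::
  "(complex \<Rightarrow> 'h::real_normed_vector \<Rightarrow> 'h) \<Rightarrow> ('h \<Rightarrow> 'h) \<Rightarrow> 'x::topological_space measure
   \<Rightarrow> (('x \<Rightarrow> complex) \<Rightarrow> 'h) \<Rightarrow> bool" where
  "nuclear_morphism cmul star \<mu> T \<longleftrightarrow>
     (\<exists>(\<gamma>::nat \<Rightarrow> 'h) (h::nat \<Rightarrow> 'x \<Rightarrow> real).
        (\<forall>l. \<gamma> l \<in> hermitian star \<and> norm (\<gamma> l) \<le> 1) \<and>
        (\<forall>l. in_I \<mu> (h l)) \<and> summable (\<lambda>l. tv_norm_dens \<mu> (h l)) \<and>
        (\<forall>v\<in>CX. (\<lambda>k. \<Sum>l<k. cmul (pair_dens \<mu> v (h l)) (\<gamma> l)) \<longlonglongrightarrow> T v))"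

end

theory Submission
  imports Defs
begin


locale hs =
  fixes cmul :: "complex \<Rightarrow> 'h::banach \<Rightarrow> 'h"
    and ip :: "'h \<Rightarrow> 'h \<Rightarrow> complex"
    and star :: "'h \<Rightarrow> 'h"
  assumes H: "hilbert_star_space cmul ip star"
begin

lemmas HH = H[unfolded hilbert_star_space_def]


lemmas cmul_real = HH[THEN conjunct1, rule_format]
lemmas cmul_ladd = HH[THEN conjunct2, THEN conjunct1, rule_format]
lemmas cmul_radd = HH[THEN conjunct2, THEN conjunct2, THEN conjunct1, rule_format]
lemmas cmul_assoc = HH[THEN conjunct2, THEN conjunct2, THEN conjunct2, THEN conjunct1, rule_format]
lemmas ip_ladd = HH[THEN conjunct2, THEN conjunct2, THEN conjunct2, THEN conjunct2, THEN conjunct1, rule_format]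
lemmas ip_lscale = HH[THEN conjunct2, THEN conjunct2, THEN conjunct2, THEN conjunct2, THEN conjunct2, THEN conjunct1, rule_format]
lemmas ip_sym = HH[THEN conjunct2, THEN conjunct2, THEN conjunct2, THEN conjunct2, THEN conjunct2, THEN conjunct2, THEN conjunct1, rule_format]
lemmas norm_ip = HH[THEN conjunct2, THEN conjunct2, THEN conjunct2, THEN conjunct2, THEN conjunct2, THEN conjunct2, THEN conjunct2, THEN conjunct1, rule_format]
lemmas star_add = HH[THEN conjunct2, THEN conjunct2, THEN conjunct2, THEN conjunct2, THEN conjunct2, THEN conjunct2, THEN conjunct2, THEN conjunct2, THEN conjunct1, rule_format]
lemmas star_cmul = HH[THEN conjunct2, THEN conjunct2, THEN conjunct2, THEN conjunct2, THEN conjunct2, THEN conjunct2, THEN conjunct2, THEN conjunct2, THEN conjunct2, THEN conjunct1, rule_format]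
lemmas star_star = HH[THEN conjunct2, THEN conjunct2, THEN conjunct2, THEN conjunct2, THEN conjunct2, THEN conjunct2, THEN conjunct2, THEN conjunct2, THEN conjunct2, THEN conjunct2, THEN conjunct1, rule_format]
lemmas ip_star = HH[THEN conjunct2, THEN conjunct2, THEN conjunct2, THEN conjunct2, THEN conjunct2, THEN conjunct2, THEN conjunct2, THEN conjunct2, THEN conjunct2, THEN conjunct2, THEN conjunct2, rule_format]

lemma cmul_one: "cmul 1 x = x" using cmul_real[of 1 x] by simp

sublocale module cmul
  by unfold_locales (simp_all add: cmul_radd cmul_ladd cmul_assoc cmul_one)

lemma ip_radd: "ip z (x + y) = ip z x + ip z y"
proof -
  have "ip z (x + y) = cnj (ip (x+y) z)" by (rule ip_sym)
  also have "\<dots> = cnj (ip x z) + cnj (ip y z)" by (simp add: ip_ladd)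
  also have "\<dots> = ip z x + ip z y" by (simp add: ip_sym[of z x] ip_sym[of z y])
  finally show ?thesis .
qed
lemma ip_rscale: "ip x (cmul a y) = cnj a * ip x y"
proof -
  have "ip x (cmul a y) = cnj (ip (cmul a y) x)" by (rule ip_sym)
  also have "\<dots> = cnj a * cnj (ip y x)" by (simp add: ip_lscale)
  also have "\<dots> = cnj a * ip x y" by (simp add: ip_sym[of x y])
  finally show ?thesis .
qed
lemma ip_self_Im: "Im (ip x x) = 0"
proof -
  have "Im (ip x x) = Im (cnj (ip x x))" using ip_sym[of x x] by simp
  thus ?thesis by simp
qed
lemma ip_self_Re: "Re (ip x x) = (norm x)^2"
proof -
  have "Re (ip x x) \<ge> 0"
  proof (rule ccontr)
    assume "\<not> Re (ip x x) \<ge> 0"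
    hence "sqrt (Re (ip x x)) < 0" by simp
    thus False using norm_ip[of x] norm_ge_zero[of x] by linarith
  qed
  then show ?thesis using norm_ip[of x] by simp
qed
lemma ip_self: "ip x x = complex_of_real ((norm x)^2)"
  using ip_self_Re ip_self_Im by (simp add: complex_eq_iff)

lemma norm_cmul: "norm (cmul c x) = cmod c * norm x"
proof -
  have "(norm (cmul c x))^2 = Re (ip (cmul c x) (cmul c x))" by (simp add: ip_self_Re)
  also have "ip (cmul c x) (cmul c x) = (c * cnj c) * ip x x" by (simp add: ip_lscale ip_rscale)
  also have "c * cnj c = complex_of_real ((cmod c)^2)" by (rule complex_norm_square[symmetric])
  finally have "(norm (cmul c x))^2 = (cmod c)^2 * (norm x)^2" by (simp add: ip_self)
  also have "\<dots> = (cmod c * norm x)^2" by (simp add: power_mult_distrib)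
  finally show ?thesis by (simp add: power2_eq_iff_nonneg)
qed

lemma ip_zero_r[simp]: "ip x 0 = 0"
  using ip_rscale[of x 0 x] by simp
lemma ip_zero_l[simp]: "ip 0 x = 0"
  using ip_lscale[of 0 x x] by simp

lemma polar: "(norm (x + y))^2 = (norm x)^2 + (norm y)^2 + 2 * Re (ip x y)"
proof -
  have "(norm (x + y))^2 = Re (ip (x+y) (x+y))" by (simp add: ip_self_Re)
  also have "\<dots> = Re (ip x x) + Re (ip y y) + Re (ip x y) + Re (ip y x)"
    by (simp add: ip_ladd ip_radd)
  also have "Re (ip y x) = Re (ip x y)" using ip_sym[of y x] by simp
  finally show ?thesis by (simp add: ip_self_Re)
qed

lemma CS_Re: "\<bar>Re (ip x y)\<bar> \<le> norm x * norm y"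
proof -
  have a: "norm (x + y) \<le> norm x + norm y" by (rule norm_triangle_ineq)
  have b: "norm (x + - y) \<le> norm x + norm y" using norm_triangle_ineq[of x "-y"] by simp
  have "(norm (x+y))^2 \<le> (norm x + norm y)^2" using a by (simp add: power_mono)
  hence 1: "Re (ip x y) \<le> norm x * norm y" using polar[of x y] by (simp add: power2_sum)
  have "(norm (x+ -y))^2 \<le> (norm x + norm y)^2" using b by (simp add: power_mono)
  moreover have "ip x (-y) = - ip x y" using ip_radd[of x y "-y"] by (simp add: eq_neg_iff_add_eq_0 add.commute)
  ultimately have 2: "- Re (ip x y) \<le> norm x * norm y" using polar[of x "-y"] by (simp add: power2_sum)
  from 1 2 show ?thesis by linarith
qed

lemma herm_ip_real: "x \<in> hermitian star \<Longrightarrow> y \<in> hermitian star \<Longrightarrow> Im (ip x y) = 0"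
proof -
  assume "x \<in> hermitian star" "y \<in> hermitian star"
  hence "star x = x" "star y = y" unfolding hermitian_def by auto
  hence "Im (ip x y) = Im (cnj (ip x y))" using ip_star[of x y] by simp
  thus ?thesis by simp
qed

lemma Re_ip_formula: "Re (ip x y) = ((norm (x+y))^2 - (norm x)^2 - (norm y)^2) / 2"
  using polar[of x y] by simp

lemma Re_ip_cont: "continuous_on UNIV (\<lambda>x. Re (ip x y))"
  unfolding Re_ip_formula by (intro continuous_intros) auto

lemma Re_ip_tendsto: "(f \<longlongrightarrow> l) F \<Longrightarrow> ((\<lambda>n. Re (ip (f n) y)) \<longlongrightarrow> Re (ip l y)) F"
  unfolding Re_ip_formula by (intro tendsto_intros) auto

lemma ip_sum_l: "ip (\<Sum>i\<in>A. f i) y = (\<Sum>i\<in>A. ip (f i) y)"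
  by (induction A rule: infinite_finite_induct) (auto simp: ip_ladd ip_self[of 0, simplified] ip_lscale[of 0, simplified])

lemma cmul_tendsto: "(f \<longlongrightarrow> c) F \<Longrightarrow> ((\<lambda>n. cmul (f n) x) \<longlongrightarrow> cmul c x) F"
proof -
  assume a: "(f \<longlongrightarrow> c) F"
  have "((\<lambda>n. f n - c) \<longlongrightarrow> 0) F" using a by (simp add: LIM_zero)
  then have "((\<lambda>n. norm (f n - c) * norm x) \<longlongrightarrow> 0) F"
    by (intro tendsto_mult_left_zero tendsto_norm_zero)
  then have "((\<lambda>n. cmul (f n) x - cmul c x) \<longlongrightarrow> 0) F"
    by (rule tendsto_norm_zero_cancel[OF Lim_null_comparison[rotated]])
       (auto simp: norm_cmul scale_left_diff_distrib[symmetric])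
  then show ?thesis by (simp add: LIM_zero_iff)
qed

end



lemma radon_space: "radon_measure M \<Longrightarrow> space M = UNIV"
  unfolding radon_measure_def by (metis sets_eq_imp_space_eq space_borel)

lemma compact_sets: "radon_measure M \<Longrightarrow> compact (K::'x::t2_space set) \<Longrightarrow> K \<in> sets M"
  unfolding radon_measure_def by (simp add: borel_closed compact_imp_closed)

lemma radon_approx:
  fixes M :: "'x::t2_space measure"
  assumes R: "radon_measure M" and A: "A \<in> sets M" and e: "e > 0"
  shows "\<exists>K. compact K \<and> K \<subseteq> A \<and> measure M A < measure M K + e"
proof -
  interpret finite_measure M using R unfolding radon_measure_def by blast
  have eq: "emeasure M A = (SUP K\<in>{K. compact K \<and> K \<subseteq> A}. emeasure M K)"
    using R A unfolding radon_measure_def by blast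
  show ?thesis
  proof (cases "measure M A - e < 0")
    case True
    then show ?thesis by (intro exI[of _ "{}"]) auto
  next
    case False
    have "ennreal (measure M A - e) < ennreal (measure M A)"
      using False e by (subst ennreal_less_iff) auto
    also have "\<dots> = (SUP K\<in>{K. compact K \<and> K \<subseteq> A}. emeasure M K)"
      using eq by (simp add: emeasure_eq_measure)
    finally obtain K where K: "compact K" "K \<subseteq> A" "ennreal (measure M A - e) < emeasure M K"
      by (auto simp: less_SUP_iff)
    then have "measure M A - e < measure M K"
      using False ennreal_less_iff[of "measure M A - e" "measure M K"] by (simp add: emeasure_eq_measure)
    with K show ?thesis by (intro exI[of _ K]) auto
  qed
qed

lemma radon_intro:
  fixes M :: "'x::t2_space measure"
  assumes S: "sets M = sets borel" and F: "finite_measure M"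
    and ap: "\<And>A e. A \<in> sets M \<Longrightarrow> e > 0 \<Longrightarrow> \<exists>K. compact K \<and> K \<subseteq> A \<and> measure M A < measure M K + e"
  shows "radon_measure M"
proof -
  interpret finite_measure M by (rule F)
  have "emeasure M A = (SUP K\<in>{K. compact K \<and> K \<subseteq> A}. emeasure M K)" if A: "A \<in> sets M" for A
  proof (rule antisym)
    show "emeasure M A \<le> (SUP K\<in>{K. compact K \<and> K \<subseteq> A}. emeasure M K)"
    proof (rule ennreal_le_epsilon)
      fix e :: real assume e: "0 < e"
      obtain K where K: "compact K" "K \<subseteq> A" "measure M A < measure M K + e" using ap[OF A e] by blast
      have "emeasure M A \<le> ennreal (measure M K) + ennreal e"
        using K e by (simp add: emeasure_eq_measure ennreal_plus[symmetric] del: ennreal_plus)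
      also have "ennreal (measure M K) \<le> (SUP K\<in>{K. compact K \<and> K \<subseteq> A}. emeasure M K)"
        using K by (intro SUP_upper2[of K]) (auto simp: emeasure_eq_measure)
      finally show "emeasure M A \<le> (SUP K\<in>{K. compact K \<and> K \<subseteq> A}. emeasure M K) + ennreal e"
        by simp
    qed
    show "(SUP K\<in>{K. compact K \<and> K \<subseteq> A}. emeasure M K) \<le> emeasure M A"
      using A S by (intro SUP_least emeasure_mono) (auto simp: borel_closed compact_imp_closed)
  qed
  then show ?thesis using S F unfolding radon_measure_def by blast
qed

lemma emeasure_density_int:
  assumes f: "integrable M f" "\<And>x. 0 \<le> f x" and A: "A \<in> sets M"
  shows "emeasure (density M (\<lambda>x. ennreal (f x))) A = ennreal (\<integral>x. f x * indicator A x \<partial>M)"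
proof -
  have fm[measurable]: "f \<in> borel_measurable M" using f by auto
  have "emeasure (density M (\<lambda>x. ennreal (f x))) A = (\<integral>\<^sup>+x. ennreal (f x) * indicator A x \<partial>M)"
    using A by (intro emeasure_density) auto
  also have "\<dots> = (\<integral>\<^sup>+x. ennreal (f x * indicator A x) \<partial>M)"
    by (intro nn_integral_cong) (auto split: split_indicator)
  also have "\<dots> = ennreal (\<integral>x. f x * indicator A x \<partial>M)"
  proof (rule nn_integral_eq_integral)
    show "integrable M (\<lambda>x. f x * indicator A x)"
      using integrable_mult_indicator[OF A f(1)] by (simp add: mult.commute)
  qed (use f in \<open>auto split: split_indicator\<close>)
  finally show ?thesis .
qed

lemma measure_density_int:
  assumes f: "integrable M f" "\<And>x. 0 \<le> f x" and A: "A \<in> sets M"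
  shows "measure (density M (\<lambda>x. ennreal (f x))) A = (\<integral>x. f x * indicator A x \<partial>M)"
  unfolding measure_def using emeasure_density_int[OF assms] f
  by (simp add: integral_nonneg_AE)

lemma finite_density:
  assumes f: "integrable M f" "\<And>x. 0 \<le> f x"
  shows "finite_measure (density M (\<lambda>x. ennreal (f x)))"
  by (rule finite_measureI) (simp add: emeasure_density_int[OF f])

lemma radon_density:
  fixes \<mu> :: "'x::t2_space measure"
  assumes R: "radon_measure \<mu>" and f: "integrable \<mu> f" "\<And>x. 0 \<le> f x"
  shows "radon_measure (density \<mu> (\<lambda>x. ennreal (f x)))" (is "radon_measure ?\<nu>")
proof (rule radon_intro)
  have fm[measurable]: "f \<in> borel_measurable \<mu>" using f by auto
  interpret M: finite_measure \<mu> using R unfolding radon_measure_def by blast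
  interpret N: finite_measure ?\<nu> by (rule finite_density[OF f])
  show "sets ?\<nu> = sets borel" using R unfolding radon_measure_def by simp
  show "finite_measure ?\<nu>" by (rule N.finite_measure_axioms)
  fix A e assume A': "A \<in> sets ?\<nu>" and e: "(e::real) > 0"
  have A: "A \<in> sets \<mu>" using A' by simp
  have "\<forall>n. \<exists>K. compact K \<and> K \<subseteq> A \<and> measure \<mu> A < measure \<mu> K + 1 / real (Suc n)"
    using radon_approx[OF R A] by simp
  then obtain K where K: "\<And>n. compact (K n)" "\<And>n. K n \<subseteq> A"
    "\<And>n. measure \<mu> A < measure \<mu> (K n) + 1 / real (Suc n)"
    by metis
  define L where "L n = (\<Union>i\<le>n. K i)" for n
  have Lc: "compact (L n)" for n unfolding L_def using K(1) by (intro compact_UN) auto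
  have LA: "L n \<subseteq> A" for n unfolding L_def using K(2) by auto
  have Ls: "L n \<in> sets \<mu>" for n using compact_sets[OF R Lc] .
  have Ks: "K n \<in> sets \<mu>" for n using compact_sets[OF R K(1)] .
  define D where "D n = A - L n" for n
  have Ds: "D n \<in> sets \<mu>" for n unfolding D_def using A Ls by auto
  have dec: "decseq D" unfolding D_def L_def decseq_def by auto
  have "measure \<mu> (\<Inter>n. D n) \<le> 0"
  proof (rule ccontr)
    assume "\<not> measure \<mu> (\<Inter>n. D n) \<le> 0"
    then obtain n where n: "inverse (real (Suc n)) < measure \<mu> (\<Inter>n. D n)"
      using reals_Archimedean by (metis not_le)
    have "measure \<mu> (\<Inter>n. D n) \<le> measure \<mu> (D n)"
      using Ds by (intro M.finite_measure_mono) auto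
    also have "\<dots> \<le> measure \<mu> (A - K n)"
      unfolding D_def L_def using A Ks by (intro M.finite_measure_mono) auto
    also have "\<dots> = measure \<mu> A - measure \<mu> (K n)"
      using A Ks K(2) by (intro M.finite_measure_Diff) auto
    also have "\<dots> < inverse (real (Suc n))" using K(3)[of n] by (simp add: field_simps)
    finally show False using n by simp
  qed
  then have "measure \<mu> (\<Inter>n. D n) = 0" using measure_nonneg[of \<mu> "\<Inter>n. D n"] by linarith
  then have "emeasure \<mu> (\<Inter>n. D n) = 0" by (simp add: M.emeasure_eq_measure)
  moreover have "(\<Inter>n. D n) \<in> sets \<mu>" using Ds by auto
  ultimately have null: "(\<Inter>n. D n) \<in> null_sets \<mu>" by (intro null_setsI)
  then have "(\<Inter>n. D n) \<in> null_sets ?\<nu>"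
    by (subst null_sets_density_iff) (auto intro: AE_mp[OF AE_not_in[OF null]])
  then have "emeasure ?\<nu> (\<Inter>n. D n) = 0" by (rule null_setsD1)
  then have "measure ?\<nu> (\<Inter>n. D n) = 0" unfolding measure_def by (simp only: enn2real_0)
  moreover have "(\<lambda>n. measure ?\<nu> (D n)) \<longlonglongrightarrow> measure ?\<nu> (\<Inter>n. D n)"
    using Ds dec by (intro N.finite_Lim_measure_decseq) auto
  ultimately have "eventually (\<lambda>n. measure ?\<nu> (D n) < e) sequentially"
    using e by (metis order_tendstoD(2))
  then obtain n where n: "measure ?\<nu> (D n) < e"
    unfolding eventually_sequentially by auto
  have "measure ?\<nu> (D n) = measure ?\<nu> A - measure ?\<nu> (L n)"
    unfolding D_def using A Ls LA by (intro N.finite_measure_Diff) auto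
  then show "\<exists>K. compact K \<and> K \<subseteq> A \<and> measure ?\<nu> A < measure ?\<nu> K + e"
    using n Lc LA by (intro exI[of _ "L n"]) auto
qed




lemma cx_meas: "v \<in> CX \<Longrightarrow> sets M = sets borel \<Longrightarrow> v \<in> borel_measurable M"
  unfolding CX_def using borel_measurable_continuous_onI measurable_cong_sets by blast

lemma cx_bounded:
  assumes "compact (UNIV :: 'x::topological_space set)" "v \<in> CX"
  shows "\<exists>B. \<forall>x::'x. cmod (v x) \<le> B"
proof -
  have "compact (v ` UNIV)" using assms unfolding CX_def by (intro compact_continuous_image) auto
  then have "bounded (v ` UNIV)" by (rule compact_imp_bounded)
  then show ?thesis unfolding bounded_iff by auto
qed

lemma int_bounded_mult:
  fixes v :: "'x \<Rightarrow> complex"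
  assumes h: "integrable M h" and v: "v \<in> borel_measurable M" and B: "\<And>x. cmod (v x) \<le> B"
  shows "integrable M (\<lambda>x. v x * complex_of_real (h x))"
proof (rule Bochner_Integration.integrable_bound)
  show "integrable M (\<lambda>x. B * \<bar>h x\<bar>)" using h by auto
  show "(\<lambda>x. v x * complex_of_real (h x)) \<in> borel_measurable M" using h v by measurable
  show "AE x in M. norm (v x * complex_of_real (h x)) \<le> norm (B * \<bar>h x\<bar>)"
    using B by (auto simp: norm_mult intro!: mult_right_mono abs_ge_zero order_trans[OF _ abs_ge_self])
qed

lemma int_bounded_scaleR:
  fixes v :: "'x \<Rightarrow> complex"
  assumes h: "integrable M h" and v: "v \<in> borel_measurable M" and B: "\<And>x. cmod (v x) \<le> B"
  shows "integrable M (\<lambda>x. h x *\<^sub>R v x)"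
  using int_bounded_mult[OF assms] by (simp add: scaleR_conv_of_real mult.commute)

lemma int_bound_abs:
  fixes v :: "'x \<Rightarrow> complex"
  assumes h: "integrable M h" and v: "v \<in> borel_measurable M" and B: "\<And>x. cmod (v x) \<le> B"
  shows "cmod (\<integral>x. v x * complex_of_real (h x) \<partial>M) \<le> B * (\<integral>x. \<bar>h x\<bar> \<partial>M)"
proof -
  have "cmod (\<integral>x. v x * complex_of_real (h x) \<partial>M) \<le> (\<integral>x. cmod (v x * complex_of_real (h x)) \<partial>M)"
    by (rule integral_norm_bound)
  also have "\<dots> \<le> (\<integral>x. B * \<bar>h x\<bar> \<partial>M)"
  proof (rule integral_mono)
    show "integrable M (\<lambda>x. cmod (v x * complex_of_real (h x)))"
      using integrable_norm[OF int_bounded_mult[OF assms]] .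
    show "integrable M (\<lambda>x. B * \<bar>h x\<bar>)" using h by auto
    fix x show "cmod (v x * complex_of_real (h x)) \<le> B * \<bar>h x\<bar>"
      using B[of x] by (simp add: norm_mult mult_right_mono)
  qed
  also have "\<dots> = B * (\<integral>x. \<bar>h x\<bar> \<partial>M)" by simp
  finally show ?thesis .
qed

lemma LIMSEQ_even_odd:
  fixes X :: "nat \<Rightarrow> 'a::metric_space"
  assumes "(\<lambda>k. X (2*k)) \<longlonglongrightarrow> L" "(\<lambda>k. X (2*k+1)) \<longlonglongrightarrow> L"
  shows "X \<longlonglongrightarrow> L"
proof (rule metric_LIMSEQ_I)
  fix r :: real assume r: "0 < r"
  obtain N1 where N1: "\<And>k. k \<ge> N1 \<Longrightarrow> dist (X (2*k)) L < r" using metric_LIMSEQ_D[OF assms(1) r] by auto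
  obtain N2 where N2: "\<And>k. k \<ge> N2 \<Longrightarrow> dist (X (2*k+1)) L < r" using metric_LIMSEQ_D[OF assms(2) r] by auto
  show "\<exists>no. \<forall>n\<ge>no. dist (X n) L < r"
  proof (intro exI allI impI)
    fix n assume n: "n \<ge> 2 * (N1 + N2)"
    show "dist (X n) L < r"
    proof (cases "even n")
      case True
      then obtain k where k: "n = 2*k" by blast
      then show ?thesis using N1[of k] n by auto
    next
      case False
      then obtain k where k: "n = 2*k+1" using oddE by blast
      then show ?thesis using N2[of k] n by auto
    qed
  qed
qed

lemma sum_pairs_lt: "(\<Sum>m<2*k. t m) = (\<Sum>l<k. t (2*l) + t (2*l+1))"
  for t :: "nat \<Rightarrow> 'a::comm_monoid_add"
  by (induction k) (simp_all add: add.assoc)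




context hs begin

lemma star_minus: "star (- x) = - star x"
proof -
  have "star x + star (- x) = 0" using star_add[of x "-x"] star_cmul[of 0 x] by simp
  then show ?thesis by (rule minus_unique[symmetric])
qed

lemma star_scaleR: "star (r *\<^sub>R x) = r *\<^sub>R star x"
  using star_cmul[of "complex_of_real r" x] by (simp add: cmul_real)

lemma herm_add: "x \<in> hermitian star \<Longrightarrow> y \<in> hermitian star \<Longrightarrow> x + y \<in> hermitian star"
  unfolding hermitian_def by (simp add: star_add)
lemma herm_minus: "x \<in> hermitian star \<Longrightarrow> - x \<in> hermitian star"
  unfolding hermitian_def by (simp add: star_minus)
lemma herm_scaleR: "x \<in> hermitian star \<Longrightarrow> r *\<^sub>R x \<in> hermitian star"
  unfolding hermitian_def by (simp add: star_scaleR)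

lemma ip_scaleR_l: "ip (r *\<^sub>R x) y = complex_of_real r * ip x y"
  using ip_lscale[of "complex_of_real r" x y] by (simp add: cmul_real)
lemma ip_scaleR_r: "ip x (r *\<^sub>R y) = complex_of_real r * ip x y"
  using ip_rscale[of x "complex_of_real r" y] by (simp add: cmul_real)

lemma cone_shift:
  assumes g: "g \<in> hermitian star" "norm g \<le> 1" and e: "e \<in> hermitian star" "norm e = 1"
  shows "g + 2 *\<^sub>R e \<in> unital_cone ip star e"
proof -
  define a where "a = Re (ip g e)"
  have a1: "\<bar>a\<bar> \<le> 1" using CS_Re[of g e] g(2) e(2) unfolding a_def by simp
  have ee: "ip e e = 1" using ip_self[of e] e by simp
  have re: "Re (ip (g + 2 *\<^sub>R e) e) = a + 2"
    by (simp add: ip_ladd ip_scaleR_l ee a_def)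
  have "(norm (g + 2 *\<^sub>R e))^2 = (norm g)^2 + (norm (2 *\<^sub>R e))^2 + 2 * Re (ip g (2 *\<^sub>R e))"
    by (rule polar)
  also have "\<dots> = (norm g)^2 + 4 + 4 * a"
    using e by (simp add: ip_scaleR_r a_def)
  also have "\<dots> \<le> (sqrt 2 * (a + 2))^2"
  proof -
    have "(norm g)^2 \<le> 1" using g(2) norm_ge_zero[of g] by (simp add: power_le_one)
    moreover have "0 \<le> (a+1)^2" by (rule zero_le_power2)
    moreover have "(sqrt 2 * (a + 2))^2 = 2 * (a+1)^2 + 4 * a + 6"
      by (simp add: power_mult_distrib power2_eq_square algebra_simps)
    ultimately show ?thesis by linarith
  qed
  finally have sq: "(norm (g + 2 *\<^sub>R e))^2 \<le> (sqrt 2 * (a + 2))^2" .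
  have "norm (g + 2 *\<^sub>R e) \<le> sqrt 2 * (a + 2)"
    by (rule power2_le_imp_le[OF sq]) (use a1 in auto)
  moreover have "g + 2 *\<^sub>R e \<in> hermitian star" using g e by (intro herm_add herm_scaleR)
  ultimately show ?thesis unfolding unital_cone_def using re by auto
qed

lemma cone_Re_nonneg: "p \<in> unital_cone ip star e \<Longrightarrow> 0 \<le> Re (ip p e)"
proof (rule ccontr)
  assume p: "p \<in> unital_cone ip star e" and n: "\<not> 0 \<le> Re (ip p e)"
  have "sqrt 2 * Re (ip p e) < 0" using n by (intro mult_pos_neg) auto
  then show False using p norm_ge_zero[of p] unfolding unital_cone_def by auto
qed

lemma cone_norm: "p \<in> unital_cone ip star e \<Longrightarrow> norm p \<le> sqrt 2 * Re (ip p e)"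
  unfolding unital_cone_def by auto

end



lemma pd_add:
  assumes "finite_measure \<mu>" "sets \<mu> = sets borel" "compact (UNIV::'x::topological_space set)"
    "integrable \<mu> h" "v \<in> CX" "w \<in> CX"
  shows "pair_dens \<mu> (\<lambda>x::'x. v x + w x) h = pair_dens \<mu> v h + pair_dens \<mu> w h"
proof -
  obtain B1 where B1: "\<And>x. cmod (v x) \<le> B1" using cx_bounded[OF assms(3,5)] by blast
  obtain B2 where B2: "\<And>x. cmod (w x) \<le> B2" using cx_bounded[OF assms(3,6)] by blast
  have i1: "integrable \<mu> (\<lambda>x. v x * complex_of_real (h x))"
    by (rule int_bounded_mult[OF assms(4) cx_meas[OF assms(5,2)] B1])
  have i2: "integrable \<mu> (\<lambda>x. w x * complex_of_real (h x))"
    by (rule int_bounded_mult[OF assms(4) cx_meas[OF assms(6,2)] B2])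
  show ?thesis unfolding pair_dens_def
    using Bochner_Integration.integral_add[OF i1 i2] by (simp add: distrib_right)
qed

lemma pd_mult:
  shows "pair_dens \<mu> (\<lambda>x. c * v x) h = c * pair_dens \<mu> v h"
  unfolding pair_dens_def by (simp add: mult.assoc)

lemma lin_map_shift:
  assumes H: "hilbert_star_space cmul ip star" and T: "lin_map cmul T"
    and "finite_measure \<mu>" "sets \<mu> = sets borel" "compact (UNIV::'x::topological_space set)"
    "integrable \<mu> h"
  shows "lin_map cmul (\<lambda>v::'x\<Rightarrow>complex. T v + cmul (pair_dens \<mu> v h) e)"
proof -
  interpret hs cmul ip star by (rule hs.intro[OF H])
  show ?thesis unfolding lin_map_def
  proof (intro conjI ballI allI)
    fix v w :: "'x \<Rightarrow> complex" assume v: "v \<in> CX" and w: "w \<in> CX"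
    show "T (\<lambda>x. v x + w x) + cmul (pair_dens \<mu> (\<lambda>x. v x + w x) h) e =
        T v + cmul (pair_dens \<mu> v h) e + (T w + cmul (pair_dens \<mu> w h) e)"
      using T v w pd_add[OF assms(3-6) v w] unfolding lin_map_def
      by (simp add: scale_left_distrib algebra_simps)
  next
    fix c and v :: "'x \<Rightarrow> complex" assume v: "v \<in> CX"
    show "T (\<lambda>x. c * v x) + cmul (pair_dens \<mu> (\<lambda>x. c * v x) h) e =
        cmul c (T v + cmul (pair_dens \<mu> v h) e)"
      using T v unfolding lin_map_def
      by (simp add: pd_mult scale_right_distrib)
  qed
qed


lemma forward:
  fixes cmul :: "complex \<Rightarrow> 'h::banach \<Rightarrow> 'h"
    and ip :: "'h \<Rightarrow> 'h \<Rightarrow> complex"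
    and star :: "'h \<Rightarrow> 'h"
    and e :: 'h
    and T :: "('x::t2_space \<Rightarrow> complex) \<Rightarrow> 'h"
    and \<mu> :: "'x measure"
  assumes X_compact: "compact (UNIV :: 'x set)"
    and H: "hilbert_star_space cmul ip star"
    and e_herm: "e \<in> hermitian star"
    and e_unit: "norm e = 1"
    and T_lin: "lin_map cmul T"
    and mu_prob: "prob_space \<mu>"
    and mu_radon: "radon_measure \<mu>"
    and N: "nuclear_morphism cmul star \<mu> T"
  shows "\<exists>h. in_I \<mu> h \<and> (AE x in \<mu>. h x \<ge> 0) \<and>
                 separable_map cmul ip star e (\<lambda>v. T v + cmul (pair_dens \<mu> v h) e)"
proof -
  interpret hs cmul ip star by (rule hs.intro[OF H])
  interpret M: prob_space \<mu> by (rule mu_prob)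
  have sets_mu: "sets \<mu> = sets borel" using mu_radon unfolding radon_measure_def by blast
  obtain \<gamma> hh where \<gamma>: "\<And>l. \<gamma> l \<in> hermitian star" "\<And>l. norm (\<gamma> l) \<le> 1"
    and hI: "\<And>l. in_I \<mu> (hh l)" and sm: "summable (\<lambda>l. tv_norm_dens \<mu> (hh l))"
    and conv: "\<And>v. v \<in> CX \<Longrightarrow> (\<lambda>k. \<Sum>l<k. cmul (pair_dens \<mu> v (hh l)) (\<gamma> l)) \<longlonglongrightarrow> T v"
    using N unfolding nuclear_morphism_def by blast
  have hint: "integrable \<mu> (hh l)" for l using hI unfolding in_I_def by blast
  have hm[measurable]: "hh l \<in> borel_measurable \<mu>" for l using hint by auto
  define g where "g l x = 2 * \<bar>hh l x\<bar>" for l x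
  have gint: "integrable \<mu> (g l)" for l unfolding g_def using hint by auto
  have gm[measurable]: "g l \<in> borel_measurable \<mu>" for l using gint by auto
  have gnn: "0 \<le> g l x" for l x unfolding g_def by simp
  have tvnn: "0 \<le> tv_norm_dens \<mu> (hh l)" for l unfolding tv_norm_dens_def by simp
  have intg: "(\<integral>x. \<bar>g l x\<bar> \<partial>\<mu>) = 2 * tv_norm_dens \<mu> (hh l)" for l
    unfolding g_def tv_norm_dens_def by simp
  have smg: "summable (\<lambda>l. \<integral>x. \<bar>g l x\<bar> \<partial>\<mu>)"
    unfolding intg by (intro summable_mult sm)
  have AEs: "AE x in \<mu>. summable (\<lambda>l. \<bar>hh l x\<bar>)"
  proof -
    have "(\<integral>\<^sup>+x. (\<Sum>l. ennreal \<bar>hh l x\<bar>) \<partial>\<mu>) = (\<Sum>l. \<integral>\<^sup>+x. ennreal \<bar>hh l x\<bar> \<partial>\<mu>)"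
      by (rule nn_integral_suminf) measurable
    also have "\<dots> = (\<Sum>l. ennreal (tv_norm_dens \<mu> (hh l)))"
      unfolding tv_norm_dens_def
      by (intro suminf_cong nn_integral_eq_integral) (auto simp: hint)
    also have "\<dots> = ennreal (\<Sum>l. tv_norm_dens \<mu> (hh l))"
      by (rule suminf_ennreal2[OF tvnn sm])
    finally have fin: "(\<integral>\<^sup>+x. (\<Sum>l. ennreal \<bar>hh l x\<bar>) \<partial>\<mu>) \<noteq> \<infinity>" by simp
    have "AE x in \<mu>. (\<Sum>l. ennreal \<bar>hh l x\<bar>) \<noteq> \<infinity>"
      by (rule nn_integral_PInf_AE[OF _ fin]) measurable
    then show ?thesis
      by (rule AE_mp) (auto intro!: AE_I2 summable_suminf_not_top)
  qed
  have AEsg: "AE x in \<mu>. summable (\<lambda>l. \<bar>g l x\<bar>)"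
    using AEs by (rule AE_mp) (auto simp: g_def intro: summable_mult)
  define h where "h x = (\<Sum>l. g l x)" for x
  have hInt: "integrable \<mu> h"
    unfolding h_def by (rule integrable_suminf[OF gint]) (use AEsg smg in auto)
  have hAE: "AE x in \<mu>. h x \<ge> 0"
    using AEsg by (rule AE_mp) (auto simp: h_def gnn intro!: suminf_nonneg)
  have hIn: "in_I \<mu> h" unfolding in_I_def using hInt by auto
  define f where "f m x = (if even m then max 0 (hh (m div 2) x) else max 0 (- hh (m div 2) x))" for m x
  define q where "q m = density \<mu> (\<lambda>x. ennreal (f m x))" for m
  define p where "p m = (if even m then \<gamma> (m div 2) + 2 *\<^sub>R e else - \<gamma> (m div 2) + 2 *\<^sub>R e)" for m
  have fint: "integrable \<mu> (f m)" for m
    unfolding f_def by (cases "even m") (auto intro!: integrable_max hint)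
  have fm[measurable]: "f m \<in> borel_measurable \<mu>" for m using fint by auto
  have fnn: "0 \<le> f m x" for m x unfolding f_def by auto
  have qR: "radon_measure (q m)" for m unfolding q_def by (rule radon_density[OF mu_radon fint fnn])
  have pC: "p m \<in> unital_cone ip star e" for m
  proof (cases "even m")
    case True then show ?thesis unfolding p_def using \<gamma> e_herm e_unit by (auto intro!: cone_shift)
  next
    case False
    have "- \<gamma> (m div 2) + 2 *\<^sub>R e \<in> unital_cone ip star e"
      using \<gamma> e_herm e_unit by (intro cone_shift herm_minus) auto
    then show ?thesis unfolding p_def using False by simp
  qed
  have lin: "lin_map cmul (\<lambda>v. T v + cmul (pair_dens \<mu> v h) e)"
    by (rule lin_map_shift[OF H T_lin M.finite_measure_axioms sets_mu X_compact hInt])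
  have "(\<lambda>k. \<Sum>l<k. cmul (pair_meas v (q l)) (p l)) \<longlonglongrightarrow> T v + cmul (pair_dens \<mu> v h) e"
    if v: "v \<in> CX" for v
  proof -
    have vm[measurable]: "v \<in> borel_measurable \<mu>" by (rule cx_meas[OF v sets_mu])
    obtain B where B: "\<And>x. cmod (v x) \<le> B" using cx_bounded[OF X_compact v] by blast
    have B0: "0 \<le> B" using B[of undefined] norm_ge_zero order_trans by blast
    define I where "I m = (\<integral>x. v x * complex_of_real (f m x) \<partial>\<mu>)" for m
    have pm: "pair_meas v (q m) = I m" for m
      unfolding pair_meas_def q_def I_def
      by (subst integral_density) (auto simp: scaleR_conv_of_real mult.commute fnn)
    have Iint: "integrable \<mu> (\<lambda>x. v x * complex_of_real (f m x))" for m
      by (rule int_bounded_mult[OF fint vm B])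
    have Hint: "integrable \<mu> (\<lambda>x. v x * complex_of_real (hh l x))" for l
      by (rule int_bounded_mult[OF hint vm B])
    have Gint: "integrable \<mu> (\<lambda>x. v x * complex_of_real (g l x))" for l
      by (rule int_bounded_mult[OF gint vm B])
    define t where "t m = cmul (pair_meas v (q m)) (p m)" for m
    have pd_h: "pair_dens \<mu> v (hh l) = I (2*l) - I (2*l+1)" for l
    proof -
      have "pair_dens \<mu> v (hh l) = (\<integral>x. v x * complex_of_real (f (2*l) x) - v x * complex_of_real (f (2*l+1) x) \<partial>\<mu>)"
        unfolding pair_dens_def f_def
        by (intro Bochner_Integration.integral_cong refl) (auto simp: max_def algebra_simps)
      also have "\<dots> = I (2*l) - I (2*l+1)"
        unfolding I_def by (rule Bochner_Integration.integral_diff[OF Iint Iint])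
      finally show ?thesis .
    qed
    have pd_g: "pair_dens \<mu> v (g l) = 2 * (I (2*l) + I (2*l+1))" for l
    proof -
      have "pair_dens \<mu> v (g l) = (\<integral>x. 2 * (v x * complex_of_real (f (2*l) x) + v x * complex_of_real (f (2*l+1) x)) \<partial>\<mu>)"
        unfolding pair_dens_def f_def g_def
        by (intro Bochner_Integration.integral_cong refl) (auto simp: max_def algebra_simps)
      also have "\<dots> = 2 * (\<integral>x. v x * complex_of_real (f (2*l) x) + v x * complex_of_real (f (2*l+1) x) \<partial>\<mu>)"
        by (rule integral_mult_right_zero)
      also have "\<dots> = 2 * (I (2*l) + I (2*l+1))"
        unfolding I_def by (subst Bochner_Integration.integral_add[OF Iint Iint]) (rule refl)
      finally show ?thesis .
    qed
    have two: "cmul a (2 *\<^sub>R e) = cmul (2 * a) e" for a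
      using cmul_real[of 2 e, symmetric] by (simp add: scale_scale mult.commute)
    have tpair: "t (2*l) + t (2*l+1) = cmul (pair_dens \<mu> v (hh l)) (\<gamma> l) + cmul (pair_dens \<mu> v (g l)) e" for l
      unfolding t_def pm pd_h pd_g p_def
      by (simp add: scale_right_distrib two scale_left_diff_distrib scale_left_distrib
            scale_minus_right algebra_simps)
    have S: "(\<lambda>k. \<Sum>l<k. pair_dens \<mu> v (g l)) \<longlonglongrightarrow> pair_dens \<mu> v h"
    proof -
      have AEn: "AE x in \<mu>. summable (\<lambda>l. norm (v x * complex_of_real (g l x)))"
        using AEsg by (rule AE_mp) (auto intro!: AE_I2 summable_mult simp: norm_mult)
      have "summable (\<lambda>l. \<integral>x. norm (v x * complex_of_real (g l x)) \<partial>\<mu>)"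
      proof (rule summable_comparison_test)
        show "summable (\<lambda>l. B * \<integral>x. \<bar>g l x\<bar> \<partial>\<mu>)" by (intro summable_mult smg)
        show "\<exists>N. \<forall>n\<ge>N. norm (\<integral>x. norm (v x * complex_of_real (g n x)) \<partial>\<mu>) \<le> B * (\<integral>x. \<bar>g n x\<bar> \<partial>\<mu>)"
        proof (intro exI allI impI)
          fix n :: nat
          have "(\<integral>x. norm (v x * complex_of_real (g n x)) \<partial>\<mu>) \<le> (\<integral>x. B * \<bar>g n x\<bar> \<partial>\<mu>)"
          proof (rule integral_mono)
            show "integrable \<mu> (\<lambda>x. norm (v x * complex_of_real (g n x)))"
              using integrable_norm[OF Gint] .
            show "integrable \<mu> (\<lambda>x. B * \<bar>g n x\<bar>)" using gint by auto
            fix x show "norm (v x * complex_of_real (g n x)) \<le> B * \<bar>g n x\<bar>"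
              using B[of x] by (simp add: norm_mult mult_right_mono)
          qed
          then show "norm (\<integral>x. norm (v x * complex_of_real (g n x)) \<partial>\<mu>) \<le> B * (\<integral>x. \<bar>g n x\<bar> \<partial>\<mu>)"
            by simp
        qed
      qed
      from sums_integral[OF Gint AEn this]
      have su: "(\<lambda>l. pair_dens \<mu> v (g l)) sums (\<integral>x. (\<Sum>l. v x * complex_of_real (g l x)) \<partial>\<mu>)"
        unfolding pair_dens_def .
      have "(\<integral>x. (\<Sum>l. v x * complex_of_real (g l x)) \<partial>\<mu>) = pair_dens \<mu> v h"
        unfolding pair_dens_def h_def
      proof (rule integral_cong_AE)
        show "AE x in \<mu>. (\<Sum>l. v x * complex_of_real (g l x)) = v x * complex_of_real (\<Sum>l. g l x)"
          using AEsg
        proof (rule AE_mp, intro AE_I2 impI)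
          fix x assume "summable (\<lambda>l. \<bar>g l x\<bar>)"
          then have sg: "summable (\<lambda>l. g l x)" using gnn by simp
          then have "summable (\<lambda>l. complex_of_real (g l x))"
            by (simp add: summable_of_real)
          then show "(\<Sum>l. v x * complex_of_real (g l x)) = v x * complex_of_real (\<Sum>l. g l x)"
            using sg by (simp add: suminf_mult suminf_of_real)
        qed
      qed measurable
      with su show ?thesis unfolding sums_def by simp
    qed
    have even: "(\<lambda>k. \<Sum>m<2*k. t m) \<longlonglongrightarrow> T v + cmul (pair_dens \<mu> v h) e"
    proof -
      have "(\<Sum>m<2*k. t m) = (\<Sum>l<k. cmul (pair_dens \<mu> v (hh l)) (\<gamma> l)) + cmul (\<Sum>l<k. pair_dens \<mu> v (g l)) e" for k
        unfolding sum_pairs_lt tpair by (simp add: sum.distrib scale_sum_left)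
      moreover have "(\<lambda>k. (\<Sum>l<k. cmul (pair_dens \<mu> v (hh l)) (\<gamma> l)) + cmul (\<Sum>l<k. pair_dens \<mu> v (g l)) e)
          \<longlonglongrightarrow> T v + cmul (pair_dens \<mu> v h) e"
        by (intro tendsto_add conv[OF v] cmul_tendsto S)
      ultimately show ?thesis by simp
    qed
    have small: "(\<lambda>k. t (2*k)) \<longlonglongrightarrow> 0"
    proof (rule Lim_null_comparison)
      have "(\<lambda>k. tv_norm_dens \<mu> (hh k)) \<longlonglongrightarrow> 0" by (rule summable_LIMSEQ_zero[OF sm])
      then show "(\<lambda>k. B * tv_norm_dens \<mu> (hh k) * 3) \<longlonglongrightarrow> 0"
        by (intro tendsto_mult_left_zero tendsto_mult_right_zero)
      show "\<forall>\<^sub>F k in sequentially. norm (t (2*k)) \<le> B * tv_norm_dens \<mu> (hh k) * 3"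
      proof (intro always_eventually allI)
        fix k
        have "cmod (I (2*k)) \<le> B * (\<integral>x. \<bar>f (2*k) x\<bar> \<partial>\<mu>)"
          unfolding I_def by (rule int_bound_abs[OF fint vm B])
        also have "(\<integral>x. \<bar>f (2*k) x\<bar> \<partial>\<mu>) \<le> tv_norm_dens \<mu> (hh k)"
          unfolding tv_norm_dens_def using fint hint
          by (intro integral_mono) (auto simp: f_def)
        finally have c1: "cmod (I (2*k)) \<le> B * tv_norm_dens \<mu> (hh k)"
          using B0 by (simp add: mult_left_mono)
        have "norm (p (2*k)) \<le> norm (\<gamma> k) + norm (2 *\<^sub>R e)"
          unfolding p_def using norm_triangle_ineq[of "\<gamma> k" "2 *\<^sub>R e"] by (simp del: norm_scaleR)
        then have c2: "norm (p (2*k)) \<le> 3" using \<gamma>(2)[of k] e_unit by simp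
        have "norm (t (2*k)) = cmod (I (2*k)) * norm (p (2*k))"
          unfolding t_def pm by (rule norm_cmul)
        also have "\<dots> \<le> B * tv_norm_dens \<mu> (hh k) * 3"
          using c1 c2 B0 tvnn[of k] by (intro mult_mono) auto
        finally show "norm (t (2*k)) \<le> B * tv_norm_dens \<mu> (hh k) * 3" .
      qed
    qed
    have odd: "(\<lambda>k. \<Sum>m<2*k+1. t m) \<longlonglongrightarrow> T v + cmul (pair_dens \<mu> v h) e"
      using tendsto_add[OF even small] by simp
    show ?thesis using LIMSEQ_even_odd[OF even odd] unfolding t_def .
  qed
  then have sep: "separable_map cmul ip star e (\<lambda>v. T v + cmul (pair_dens \<mu> v h) e)"
    unfolding separable_map_def using lin qR pC by blast
  show ?thesis using hIn hAE sep by blast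
qed




lemma real_density:
  assumes M: "finite_measure \<mu>" and Q: "finite_measure Q"
    and ac: "absolutely_continuous \<mu> Q" and S: "sets Q = sets \<mu>"
  shows "\<exists>D. D \<in> borel_measurable \<mu> \<and> (\<forall>x. 0 \<le> D x) \<and> integrable \<mu> D \<and>
             density \<mu> (\<lambda>x. ennreal (D x)) = Q"
proof -
  interpret finite_measure \<mu> by (rule M)
  have sQ: "sigma_finite_measure Q" using Q by (rule finite_measure.axioms(1))
  define D where "D x = enn2real (RN_deriv \<mu> Q x)" for x
  have Dm[measurable]: "D \<in> borel_measurable \<mu>" unfolding D_def by measurable
  have fin: "AE x in \<mu>. RN_deriv \<mu> Q x \<noteq> \<infinity>" by (rule RN_deriv_finite[OF sQ ac S])
  have "density \<mu> (\<lambda>x. ennreal (D x)) = density \<mu> (RN_deriv \<mu> Q)"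
    by (rule density_cong) (use fin in \<open>auto simp: D_def top.not_eq_extremum intro: AE_mp[OF fin] \<close>)
  also have "\<dots> = Q" by (rule density_RN_deriv[OF ac S])
  finally have dQ: "density \<mu> (\<lambda>x. ennreal (D x)) = Q" .
  have "(\<integral>\<^sup>+x. ennreal (D x) \<partial>\<mu>) = emeasure (density \<mu> (\<lambda>x. ennreal (D x))) (space \<mu>)"
    by (subst emeasure_density) (auto intro!: nn_integral_cong)
  also have "\<dots> = emeasure Q (space Q)" using dQ sets_eq_imp_space_eq[OF S] by simp
  also have "\<dots> < \<infinity>" using finite_measure.emeasure_finite[OF Q] by (simp add: less_top)
  finally have "integrable \<mu> D" by (intro integrableI_nonneg) (auto simp: D_def)
  then show ?thesis using dQ Dm by (intro exI[of _ D]) (auto simp: D_def)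
qed

lemma Hausdorff_euclidean_t2: "Hausdorff_space (euclidean :: 'x::t2_space topology)"
  unfolding Hausdorff_space_def disjnt_def using hausdorff by fastforce

lemma urysohn_cpt:
  fixes K C :: "'x::t2_space set"
  assumes X: "compact (UNIV :: 'x set)" and K: "compact K" and C: "compact C" and d: "K \<inter> C = {}"
  obtains F :: "'x \<Rightarrow> real" where "continuous_on UNIV F" "\<And>x. 0 \<le> F x" "\<And>x. F x \<le> 1"
    "\<And>x. x \<in> K \<Longrightarrow> F x = 1" "\<And>x. x \<in> C \<Longrightarrow> F x = 0"
proof -
  have ns: "normal_space (euclidean :: 'x topology)"
    by (rule compact_Hausdorff_or_regular_imp_normal_space)
       (use X Hausdorff_euclidean_t2 in \<open>auto simp: compact_space_def\<close>)
  have cK: "closedin euclidean K" using K by (simp add: compact_imp_closed)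
  have cC: "closedin euclidean C" using C by (simp add: compact_imp_closed)
  obtain F where F: "continuous_map euclidean (top_of_set {0..1::real}) F" "F ` C \<subseteq> {0}" "F ` K \<subseteq> {1}"
    using Urysohn_lemma[OF ns cC cK, of 0 1] d by (auto simp: disjnt_def)
  have c: "continuous_on UNIV F" "\<And>x. F x \<in> {0..1}"
    using F(1) unfolding continuous_map_in_subtopology by auto
  show ?thesis by (rule that[of F]) (use c F(2,3) in auto)
qed


lemma int_bounded_mult_real:
  fixes F :: "'x \<Rightarrow> real"
  assumes h: "integrable M h" and F: "F \<in> borel_measurable M" and B: "\<And>x. \<bar>F x\<bar> \<le> B"
  shows "integrable M (\<lambda>x. F x * h x)"
proof (rule Bochner_Integration.integrable_bound)
  show "integrable M (\<lambda>x. B * \<bar>h x\<bar>)" using h by auto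
  show "(\<lambda>x. F x * h x) \<in> borel_measurable M" using h F by measurable
  show "AE x in M. norm (F x * h x) \<le> norm (B * \<bar>h x\<bar>)"
  proof (rule AE_I2)
    fix x
    have "\<bar>F x\<bar> \<le> \<bar>B\<bar>" using B[of x] by linarith
    then show "norm (F x * h x) \<le> norm (B * \<bar>h x\<bar>)" by (simp add: abs_mult mult_right_mono)
  qed
qed

lemma ac_lemma:
  fixes \<mu> :: "'x::t2_space measure" and Q :: "nat \<Rightarrow> 'x measure"
    and h :: "'x \<Rightarrow> real" and c :: "nat \<Rightarrow> real"
  assumes X_compact: "compact (UNIV :: 'x set)"
    and mu_prob: "prob_space \<mu>" and mu_radon: "radon_measure \<mu>"
    and hint: "integrable \<mu> h"
    and QR: "\<And>m. radon_measure (Q m)" and c0: "\<And>m. 0 \<le> c m" and cl: "0 < c l"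
    and KEY: "\<And>F. continuous_on UNIV F \<Longrightarrow> (\<And>x. 0 \<le> F x) \<Longrightarrow> (\<And>x. F x \<le> 1) \<Longrightarrow>
       (\<lambda>m. c m * (\<integral>x. F x \<partial>Q m)) sums ((\<integral>x. F x \<partial>\<mu>) + (\<integral>x. F x * h x \<partial>\<mu>))"
  shows "absolutely_continuous \<mu> (Q l)"
proof -
  interpret M: prob_space \<mu> by (rule mu_prob)
  interpret QL: finite_measure "Q l" using QR[of l] unfolding radon_measure_def by blast
  have sets_mu: "sets \<mu> = sets borel" using mu_radon unfolding radon_measure_def by blast
  have sets_Q: "sets (Q m) = sets borel" for m using QR[of m] unfolding radon_measure_def by blast
  have space_Q: "space (Q m) = UNIV" for m using radon_space[OF QR] .
  have space_mu: "space \<mu> = UNIV" using radon_space[OF mu_radon] .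
  have hm[measurable]: "h \<in> borel_measurable \<mu>" using hint by auto
  define G where "G x = \<bar>1 + h x\<bar>" for x
  have Gint: "integrable \<mu> G" unfolding G_def using hint by auto
  have Gnn: "0 \<le> G x" for x unfolding G_def by simp
  have Gm[measurable]: "G \<in> borel_measurable \<mu>" using Gint by auto
  define \<nu> where "\<nu> = density \<mu> (\<lambda>x. ennreal (G x))"
  have \<nu>R: "radon_measure \<nu>" unfolding \<nu>_def by (rule radon_density[OF mu_radon Gint Gnn])
  interpret N: finite_measure \<nu> unfolding \<nu>_def by (rule finite_density[OF Gint Gnn])
  have sets_nu: "sets \<nu> = sets borel" using \<nu>R unfolding radon_measure_def by blast
  have space_nu: "space \<nu> = UNIV" using radon_space[OF \<nu>R] .
  have Kz: "emeasure (Q l) K = 0" if K: "compact K" "K \<in> null_sets \<mu>" for K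
  proof -
    have Ks: "K \<in> sets borel" using K(1) by (simp add: borel_closed compact_imp_closed)
    have "K \<in> null_sets \<nu>" unfolding \<nu>_def
      by (subst null_sets_density_iff) (use K(2) in \<open>auto intro: AE_mp[OF AE_not_in[OF K(2)]]\<close>)
    then have "emeasure \<nu> K = 0" by (rule null_setsD1)
    then have nuK: "measure \<nu> K = 0" unfolding measure_def by (simp only: enn2real_0)
    have eps: "c l * measure (Q l) K \<le> 0 + e" if e: "e > 0" for e
    proof -
      have cK: "- K \<in> sets \<nu>" using Ks sets_nu by auto
      obtain C where C: "compact C" "C \<subseteq> - K" "measure \<nu> (- K) < measure \<nu> C + e"
        using radon_approx[OF \<nu>R cK e] by blast
      have Cs: "C \<in> sets \<nu>" using C(1) sets_nu by (simp add: borel_closed compact_imp_closed)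
      have "measure \<nu> (- K) = measure \<nu> UNIV - measure \<nu> K"
        using N.finite_measure_compl[of K] Ks sets_nu space_nu by (simp add: Compl_eq_Diff_UNIV)
      moreover have "measure \<nu> (- C) = measure \<nu> UNIV - measure \<nu> C"
        using N.finite_measure_compl[of C] Cs space_nu by (simp add: Compl_eq_Diff_UNIV)
      ultimately have nuC: "measure \<nu> (- C) < e" using C(3) nuK by simp
      obtain F :: "'x \<Rightarrow> real" where F: "continuous_on UNIV F" "\<And>x. 0 \<le> F x" "\<And>x. F x \<le> 1"
        "\<And>x. x \<in> K \<Longrightarrow> F x = 1" "\<And>x. x \<in> C \<Longrightarrow> F x = 0"
        using urysohn_cpt[OF X_compact K(1) C(1)] C(2) by blast
      have Fb: "F \<in> borel_measurable borel" by (rule borel_measurable_continuous_onI[OF F(1)])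
      have FQ[measurable]: "F \<in> borel_measurable (Q m)" for m using Fb sets_Q measurable_cong_sets by blast
      have Fmu[measurable]: "F \<in> borel_measurable \<mu>" using Fb sets_mu measurable_cong_sets by blast
      have FQi: "integrable (Q m) F" for m
      proof -
        interpret QM: finite_measure "Q m" using QR[of m] unfolding radon_measure_def by blast
        show ?thesis by (rule QM.integrable_const_bound[of _ 1]) (use F in auto)
      qed
      have i1: "measure (Q l) K \<le> (\<integral>x. F x \<partial>Q l)"
      proof -
        have "measure (Q l) K = (\<integral>x. indicator K x \<partial>Q l)" using space_Q by simp
        also have "\<dots> \<le> (\<integral>x. F x \<partial>Q l)"
        proof (rule integral_mono)
          show "integrable (Q l) (indicator K :: 'x \<Rightarrow> real)"
            using Ks sets_Q by (intro integrable_indicator_iff[THEN iffD2]) (auto simp: QL.emeasure_eq_measure)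
          show "integrable (Q l) F" by (rule FQi)
          fix x show "indicator K x \<le> F x" using F by (auto split: split_indicator)
        qed
        finally show ?thesis .
      qed
      have su: "(\<lambda>m. c m * (\<integral>x. F x \<partial>Q m)) sums ((\<integral>x. F x \<partial>\<mu>) + (\<integral>x. F x * h x \<partial>\<mu>))"
        by (rule KEY[OF F(1-3)])
      have nn: "0 \<le> c m * (\<integral>x. F x \<partial>Q m)" for m using c0 F(2) by (simp add: integral_nonneg)
      have i2: "c l * (\<integral>x. F x \<partial>Q l) \<le> (\<integral>x. F x \<partial>\<mu>) + (\<integral>x. F x * h x \<partial>\<mu>)"
      proof -
        have "c l * (\<integral>x. F x \<partial>Q l) = (\<Sum>m\<in>{l}. c m * (\<integral>x. F x \<partial>Q m))" by simp
        also have "\<dots> \<le> (\<Sum>m. c m * (\<integral>x. F x \<partial>Q m))"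
          by (rule sum_le_suminf) (use su nn in \<open>auto simp: sums_iff\<close>)
        also have "\<dots> = (\<integral>x. F x \<partial>\<mu>) + (\<integral>x. F x * h x \<partial>\<mu>)" using su by (simp add: sums_iff)
        finally show ?thesis .
      qed
      have FMi: "integrable \<mu> F" by (rule M.integrable_const_bound[of _ 1]) (use F in auto)
      have FHi: "integrable \<mu> (\<lambda>x. F x * h x)"
        by (rule int_bounded_mult_real[OF hint Fmu, of 1]) (use F in auto)
      have i3: "(\<integral>x. F x \<partial>\<mu>) + (\<integral>x. F x * h x \<partial>\<mu>) \<le> measure \<nu> (- C)"
      proof -
        have "(\<integral>x. F x \<partial>\<mu>) + (\<integral>x. F x * h x \<partial>\<mu>) = (\<integral>x. F x + F x * h x \<partial>\<mu>)"
          by (rule Bochner_Integration.integral_add[OF FMi FHi, symmetric])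
        also have "\<dots> \<le> (\<integral>x. G x * indicator (- C) x \<partial>\<mu>)"
        proof (rule integral_mono)
          show "integrable \<mu> (\<lambda>x. F x + F x * h x)" using FMi FHi by auto
          have "- C \<in> sets \<mu>" using Cs sets_nu sets_mu by auto
          then show "integrable \<mu> (\<lambda>x. G x * indicator (- C) x)"
            using integrable_mult_indicator[OF _ Gint] by (simp add: mult.commute)
          fix x
          show "F x + F x * h x \<le> G x * indicator (- C) x"
          proof (cases "x \<in> C")
            case True then show ?thesis using F(5)[of x] by simp
          next
            case False
            have "F x + F x * h x = F x * (1 + h x)" by (simp add: algebra_simps)
            also have "\<dots> \<le> F x * G x" unfolding G_def using F(2)[of x] by (intro mult_left_mono) auto
            also have "\<dots> \<le> 1 * G x" using F(3)[of x] Gnn[of x] by (intro mult_right_mono) auto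
            finally show ?thesis using False by simp
          qed
        qed
        also have "\<dots> = measure \<nu> (- C)"
          unfolding \<nu>_def using Cs sets_nu sets_mu by (subst measure_density_int[OF Gint Gnn]) auto
        finally show ?thesis .
      qed
      have "c l * measure (Q l) K \<le> c l * (\<integral>x. F x \<partial>Q l)" using i1 c0[of l] by (rule mult_left_mono)
      also have "\<dots> \<le> measure \<nu> (- C)" using i2 i3 by linarith
      finally show ?thesis using nuC by simp
    qed
    have "c l * measure (Q l) K \<le> 0" by (rule field_le_epsilon) (use eps in simp)
    then have "measure (Q l) K \<le> 0" using cl by (simp add: mult_le_0_iff)
    then have "measure (Q l) K = 0" using measure_nonneg[of "Q l" K] by linarith
    then show ?thesis by (simp add: QL.emeasure_eq_measure)
  qed
  show ?thesis unfolding absolutely_continuous_def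
  proof
    fix N assume N: "N \<in> null_sets \<mu>"
    have NQ: "N \<in> sets (Q l)" using N sets_mu sets_Q by auto
    have "emeasure (Q l) N = (SUP K\<in>{K. compact K \<and> K \<subseteq> N}. emeasure (Q l) K)"
      using QR[of l] NQ unfolding radon_measure_def by blast
    also have "\<dots> \<le> 0"
    proof (rule SUP_least)
      fix K assume "K \<in> {K. compact K \<and> K \<subseteq> N}"
      then have K: "compact K" "K \<subseteq> N" by auto
      have "K \<in> sets \<mu>" using K(1) sets_mu by (simp add: borel_closed compact_imp_closed)
      then have "K \<in> null_sets \<mu>" using null_sets_subset[OF N _ K(2)] by blast
      then show "emeasure (Q l) K \<le> 0" using Kz[OF K(1)] by simp
    qed
    finally show "N \<in> null_sets (Q l)" using NQ by (intro null_setsI) auto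
  qed
qed




lemma converse:
  fixes cmul :: "complex \<Rightarrow> 'h::banach \<Rightarrow> 'h"
    and ip :: "'h \<Rightarrow> 'h \<Rightarrow> complex"
    and star :: "'h \<Rightarrow> 'h"
    and e :: 'h
    and T :: "('x::t2_space \<Rightarrow> complex) \<Rightarrow> 'h"
    and \<mu> :: "'x measure"
  assumes X_compact: "compact (UNIV :: 'x set)"
    and H: "hilbert_star_space cmul ip star"
    and e_herm: "e \<in> hermitian star"
    and e_unit: "norm e = 1"
    and mu_prob: "prob_space \<mu>"
    and mu_radon: "radon_measure \<mu>"
    and mu_T: "\<forall>v\<in>CX. ip (T v) e = integral\<^sup>L \<mu> v"
    and hI: "in_I \<mu> h"
    and S: "separable_map cmul ip star e (\<lambda>v. T v + cmul (pair_dens \<mu> v h) e)"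
  shows "nuclear_morphism cmul star \<mu> T"
proof -
  interpret hs cmul ip star by (rule hs.intro[OF H])
  interpret M: prob_space \<mu> by (rule mu_prob)
  have sets_mu: "sets \<mu> = sets borel" using mu_radon unfolding radon_measure_def by blast
  have space_mu: "space \<mu> = UNIV" using radon_space[OF mu_radon] .
  have hint: "integrable \<mu> h" using hI unfolding in_I_def by blast
  have hm[measurable]: "h \<in> borel_measurable \<mu>" using hint by auto
  define \<phi> where "\<phi> v = T v + cmul (pair_dens \<mu> v h) e" for v
  obtain q :: "nat \<Rightarrow> 'x measure" and p where qR: "\<And>l. radon_measure (q l)"
    and pC: "\<And>l. p l \<in> unital_cone ip star e"
    and conv: "\<And>v. v \<in> CX \<Longrightarrow> (\<lambda>k. \<Sum>l<k. cmul (pair_meas v (q l)) (p l)) \<longlonglongrightarrow> \<phi> v"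
    using S unfolding separable_map_def \<phi>_def by blast
  have sets_q: "sets (q l) = sets borel" for l using qR[of l] unfolding radon_measure_def by blast
  have space_q: "space (q l) = UNIV" for l using radon_space[OF qR] .
  have qF: "finite_measure (q l)" for l using qR[of l] unfolding radon_measure_def by blast
  define a where "a l = Re (ip (p l) e)" for l
  have a0: "0 \<le> a l" for l unfolding a_def by (rule cone_Re_nonneg[OF pC])
  have pn: "norm (p l) \<le> sqrt 2 * a l" for l unfolding a_def by (rule cone_norm[OF pC])
  have Ima: "Im (ip (p l) e) = 0" for l
    using pC[of l] e_herm unfolding unital_cone_def by (auto intro: herm_ip_real)
  have ee: "ip e e = 1" using ip_self[of e] e_unit by simp
  have KEY: "(\<lambda>m. a m * (\<integral>x. F x \<partial>q m)) sums ((\<integral>x. F x \<partial>\<mu>) + (\<integral>x. F x * h x \<partial>\<mu>))"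
    if F: "continuous_on UNIV F" for F :: "'x \<Rightarrow> real"
  proof -
    define v where "v x = complex_of_real (F x)" for x
    have v: "v \<in> CX" unfolding CX_def v_def using F by (auto intro!: continuous_intros)
    have "(\<lambda>k. Re (ip (\<Sum>l<k. cmul (pair_meas v (q l)) (p l)) e)) \<longlonglongrightarrow> Re (ip (\<phi> v) e)"
      by (rule Re_ip_tendsto[OF conv[OF v]])
    moreover have "Re (ip (\<Sum>l<k. cmul (pair_meas v (q l)) (p l)) e) = (\<Sum>l<k. a l * (\<integral>x. F x \<partial>q l))" for k
      unfolding ip_sum_l ip_lscale pair_meas_def v_def a_def using Ima
      by (simp add: mult.commute)
    moreover have "Re (ip (\<phi> v) e) = (\<integral>x. F x \<partial>\<mu>) + (\<integral>x. F x * h x \<partial>\<mu>)"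
    proof -
      have "ip (T v) e = complex_of_real (\<integral>x. F x \<partial>\<mu>)" using mu_T v unfolding v_def by simp
      moreover have "pair_dens \<mu> v h = complex_of_real (\<integral>x. F x * h x \<partial>\<mu>)"
        unfolding pair_dens_def v_def by (simp flip: of_real_mult)
      ultimately show ?thesis unfolding \<phi>_def by (simp add: ip_ladd ip_lscale ee)
    qed
    ultimately show ?thesis unfolding sums_def by simp
  qed
  define mq where "mq l = measure (q l) UNIV" for l
  have smq: "summable (\<lambda>l. a l * mq l)"
  proof -
    have "(\<lambda>m. a m * (\<integral>x. 1 \<partial>q m)) sums ((\<integral>x. 1 \<partial>\<mu>) + (\<integral>x. 1 * h x \<partial>\<mu>))"
      by (rule KEY) auto
    then show ?thesis unfolding mq_def using space_q by (auto simp: summable_def)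
  qed
  have AC: "absolutely_continuous \<mu> (q l)" if pl: "p l \<noteq> 0" for l
  proof (rule ac_lemma[OF X_compact mu_prob mu_radon hint qR a0])
    have "0 < norm (p l)" using pl by simp
    then have "0 < sqrt 2 * a l" using pn[of l] by linarith
    then show "0 < a l" by (simp add: zero_less_mult_iff)
    show "(\<lambda>m. a m * (\<integral>x. F x \<partial>q m)) sums ((\<integral>x. F x \<partial>\<mu>) + (\<integral>x. F x * h x \<partial>\<mu>))"
      if "continuous_on UNIV F" for F :: "'x \<Rightarrow> real" using KEY[OF that] .
  qed
  have "\<forall>l. \<exists>D. p l \<noteq> 0 \<longrightarrow> (D \<in> borel_measurable \<mu> \<and> (\<forall>x. 0 \<le> D x) \<and> integrable \<mu> D \<and>
             density \<mu> (\<lambda>x. ennreal (D x)) = q l)"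
    using real_density[OF M.finite_measure_axioms qF AC] sets_q sets_mu by metis
  then obtain D where D: "\<And>l. p l \<noteq> 0 \<Longrightarrow> D l \<in> borel_measurable \<mu>"
    "\<And>l x. p l \<noteq> 0 \<Longrightarrow> 0 \<le> D l x" "\<And>l. p l \<noteq> 0 \<Longrightarrow> integrable \<mu> (D l)"
    "\<And>l. p l \<noteq> 0 \<Longrightarrow> density \<mu> (\<lambda>x. ennreal (D l x)) = q l"
    by metis
  define \<gamma> where "\<gamma> l = (case l of 0 \<Rightarrow> e | Suc m \<Rightarrow> (1 / norm (p m)) *\<^sub>R p m)" for l
  define hh where "hh l = (case l of 0 \<Rightarrow> (\<lambda>x. - h x) | Suc m \<Rightarrow> (\<lambda>x. if p m = 0 then 0 else norm (p m) * D m x))" for l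
  have \<gamma>H: "\<gamma> l \<in> hermitian star \<and> norm (\<gamma> l) \<le> 1" for l
  proof (cases l)
    case 0 then show ?thesis using e_herm e_unit by (simp add: \<gamma>_def)
  next
    case (Suc m)
    have "p m \<in> hermitian star" using pC[of m] unfolding unital_cone_def by auto
    then show ?thesis using Suc by (auto simp: \<gamma>_def intro!: herm_scaleR)
  qed
  have hhI: "in_I \<mu> (hh l)" for l
  proof (cases l)
    case 0 then show ?thesis using hint by (simp add: hh_def in_I_def)
  next
    case (Suc m)
    then show ?thesis using D[of m] by (cases "p m = 0") (auto simp: hh_def in_I_def)
  qed
  have mqD: "mq m = (\<integral>x. D m x \<partial>\<mu>)" if pm: "p m \<noteq> 0" for m
  proof -
    have "mq m = measure (density \<mu> (\<lambda>x. ennreal (D m x))) UNIV" unfolding mq_def using D(4)[OF pm] by simp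
    also have "\<dots> = (\<integral>x. D m x * indicator UNIV x \<partial>\<mu>)"
      by (rule measure_density_int) (use D[OF pm] sets_mu in auto)
    finally show ?thesis by simp
  qed
  have tvS: "tv_norm_dens \<mu> (hh (Suc m)) \<le> sqrt 2 * (a m * mq m)" for m
  proof (cases "p m = 0")
    case True
    then show ?thesis using a0[of m] measure_nonneg[of "q m" UNIV]
      by (simp add: hh_def tv_norm_dens_def mq_def)
  next
    case False
    have "tv_norm_dens \<mu> (hh (Suc m)) = (\<integral>x. norm (p m) * D m x \<partial>\<mu>)"
      unfolding tv_norm_dens_def hh_def using False D(2)[OF False] norm_ge_zero[of "p m"]
      by (intro Bochner_Integration.integral_cong) auto
    also have "\<dots> = norm (p m) * mq m" using mqD[OF False] by simp
    also have "\<dots> \<le> sqrt 2 * a m * mq m"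
      using pn[of m] measure_nonneg[of "q m" UNIV] by (intro mult_right_mono) (auto simp: mq_def)
    finally show ?thesis by simp
  qed
  have smtv: "summable (\<lambda>l. tv_norm_dens \<mu> (hh l))"
  proof -
    have "summable (\<lambda>m. tv_norm_dens \<mu> (hh (Suc m)))"
    proof (rule summable_comparison_test)
      show "summable (\<lambda>m. sqrt 2 * (a m * mq m))" by (intro summable_mult smq)
      show "\<exists>N. \<forall>n\<ge>N. norm (tv_norm_dens \<mu> (hh (Suc n))) \<le> sqrt 2 * (a n * mq n)"
        using tvS by (auto simp: tv_norm_dens_def)
    qed
    then show ?thesis using Series.summable_Suc_iff[of "\<lambda>l. tv_norm_dens \<mu> (hh l)"] by blast
  qed
  have "(\<lambda>k. \<Sum>l<k. cmul (pair_dens \<mu> v (hh l)) (\<gamma> l)) \<longlonglongrightarrow> T v" if v: "v \<in> CX" for v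
  proof -
    have vm[measurable]: "v \<in> borel_measurable \<mu>" by (rule cx_meas[OF v sets_mu])
    have tS: "cmul (pair_dens \<mu> v (hh (Suc m))) (\<gamma> (Suc m)) = cmul (pair_meas v (q m)) (p m)" for m
    proof (cases "p m = 0")
      case True then show ?thesis by (simp add: \<gamma>_def)
    next
      case False
      have pm: "pair_meas v (q m) = (\<integral>x. v x * complex_of_real (D m x) \<partial>\<mu>)"
        unfolding pair_meas_def D(4)[OF False, symmetric]
        by (subst integral_density) (use D[OF False] in \<open>auto simp: scaleR_conv_of_real mult.commute\<close>)
      have "pair_dens \<mu> v (hh (Suc m)) = (\<integral>x. complex_of_real (norm (p m)) * (v x * complex_of_real (D m x)) \<partial>\<mu>)"
        unfolding pair_dens_def hh_def using False
        by (intro Bochner_Integration.integral_cong) (auto simp: of_real_mult)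
      also have "\<dots> = complex_of_real (norm (p m)) * pair_meas v (q m)"
        unfolding pm by (rule integral_mult_right_zero)
      finally have pd: "pair_dens \<mu> v (hh (Suc m)) = complex_of_real (norm (p m)) * pair_meas v (q m)" .
      have ca: "cmul (c * z) y = cmul z (cmul c y)" for c z y by (metis cmul_assoc mult.commute)
      have "cmul (pair_dens \<mu> v (hh (Suc m))) (\<gamma> (Suc m))
          = cmul (pair_meas v (q m)) (cmul (complex_of_real (norm (p m))) ((1 / norm (p m)) *\<^sub>R p m))"
        unfolding pd ca by (simp add: \<gamma>_def)
      also have "\<dots> = cmul (pair_meas v (q m)) (p m)" using False by (simp add: cmul_real)
      finally show ?thesis .
    qed
    have t0: "cmul (pair_dens \<mu> v (hh 0)) (\<gamma> 0) = - cmul (pair_dens \<mu> v h) e"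
    proof -
      have "pair_dens \<mu> v (hh 0) = - pair_dens \<mu> v h" unfolding hh_def pair_dens_def by simp
      then show ?thesis by (simp add: \<gamma>_def)
    qed
    have "(\<lambda>k. - cmul (pair_dens \<mu> v h) e + (\<Sum>l<k. cmul (pair_meas v (q l)) (p l))) \<longlonglongrightarrow>
           - cmul (pair_dens \<mu> v h) e + \<phi> v"
      by (intro tendsto_add tendsto_const conv[OF v])
    moreover have "- cmul (pair_dens \<mu> v h) e + \<phi> v = T v" unfolding \<phi>_def by simp
    moreover have "(\<Sum>l<Suc k. cmul (pair_dens \<mu> v (hh l)) (\<gamma> l)) =
        - cmul (pair_dens \<mu> v h) e + (\<Sum>l<k. cmul (pair_meas v (q l)) (p l))" for k
      by (simp only: sum.lessThan_Suc_shift t0 tS)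
    ultimately have "(\<lambda>k. \<Sum>l<Suc k. cmul (pair_dens \<mu> v (hh l)) (\<gamma> l)) \<longlonglongrightarrow> T v" by simp
    then show ?thesis by (rule LIMSEQ_imp_Suc)
  qed
  then show ?thesis unfolding nuclear_morphism_def using \<gamma>H hhI smtv by blast
qed


theorem mainTheorem12:
  fixes cmul :: "complex \<Rightarrow> 'h::banach \<Rightarrow> 'h"
    and ip :: "'h \<Rightarrow> 'h \<Rightarrow> complex"
    and star :: "'h \<Rightarrow> 'h"
    and e :: 'h
    and T :: "('x::t2_space \<Rightarrow> complex) \<Rightarrow> 'h"
    and \<mu> :: "'x measure"
  assumes X_compact: "compact (UNIV :: 'x set)"
    and H: "hilbert_star_space cmul ip star"
    and e_herm: "e \<in> hermitian star"
    and e_unit: "norm e = 1"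
    and T_up: "unital_positive cmul ip star e T"
    and mu_prob: "prob_space \<mu>"
    and mu_radon: "radon_measure \<mu>"
    and mu_T: "\<forall>v\<in>CX. ip (T v) e = integral\<^sup>L \<mu> v"
  shows "(nuclear_morphism cmul star \<mu> T \<longleftrightarrow>
            (\<exists>h. in_I \<mu> h \<and>
                 separable_map cmul ip star e (\<lambda>v. T v + cmul (pair_dens \<mu> v h) e)))
       \<and> (nuclear_morphism cmul star \<mu> T \<longrightarrow>
            (\<exists>h. in_I \<mu> h \<and> (AE x in \<mu>. h x \<ge> 0) \<and>
                 separable_map cmul ip star e (\<lambda>v. T v + cmul (pair_dens \<mu> v h) e)))"
proof -
  have Tlin: "lin_map cmul T" using T_up unfolding unital_positive_def by blast
  show ?thesis
  proof (intro conjI iffI impI)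
    assume N: "nuclear_morphism cmul star \<mu> T"
    show "\<exists>h. in_I \<mu> h \<and> separable_map cmul ip star e (\<lambda>v. T v + cmul (pair_dens \<mu> v h) e)"
      using forward[OF X_compact H e_herm e_unit Tlin mu_prob mu_radon N] by blast
  next
    assume "\<exists>h. in_I \<mu> h \<and> separable_map cmul ip star e (\<lambda>v. T v + cmul (pair_dens \<mu> v h) e)"
    then obtain h where "in_I \<mu> h" "separable_map cmul ip star e (\<lambda>v. T v + cmul (pair_dens \<mu> v h) e)"
      by blast
    then show "nuclear_morphism cmul star \<mu> T"
      by (intro converse[OF X_compact H e_herm e_unit mu_prob mu_radon mu_T])
  next
    assume N: "nuclear_morphism cmul star \<mu> T"
    show "\<exists>h. in_I \<mu> h \<and> (AE x in \<mu>. h x \<ge> 0) \<and>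
                 separable_map cmul ip star e (\<lambda>v. T v + cmul (pair_dens \<mu> v h) e)"
      by (rule forward[OF X_compact H e_herm e_unit Tlin mu_prob mu_radon N])
  qed
qed

end
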